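(* Let $X,Y$ be topological spaces, $(Z,d)$ a metric space and $\mathcal F\subseteq Z^{X\times Y}$ a family of separately equicontinuous functions, i.e. $\{f(x,\cdot):f\in\mathcal F\}$ is equicontinuous on $Y$ for each $x\in X$ and $\{f(\cdot,y):f\in\mathcal F\}$ is equicontinuous on $X$ for each $y\in Y$. Then $\mathcal F$ is equi-weakly separated (as a family of functions on $X\times Y$ with the product topology).
   Context: A neighborhood assignment on a space $W$ is a family $\{V_w\}_{w\in W}$ of open subsets of $W$ with $w\in V_w$. $\mathcal F\subseteq Z^W$ is equi-weakly separated if for every $\varepsilon>0$ there is a neighborhood assignment $\{V_w\}_{w\in W}$ such that for all $p,q\in W$ and all $f\in\mathcal F$, $(p,q)\in V_q\times V_p$ implies $d(f(p),f(q))<\varepsilon$. A family of functions is equicontinuous on a space if at every point $x$, for each $\varepsilon>0$ there is a neighborhood $U$ of $x$ with $d(f(x'),f(x))<\varepsilon$ for all $x'\in U$ and all members $f$. *)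

theory Defs
  imports "HOL-Analysis.Analysis"
begin

definition equicontinuous :: "('a::topological_space \<Rightarrow> 'z::metric_space) set \<Rightarrow> bool" where
  "equicontinuous F \<longleftrightarrow>
     (\<forall>x. \<forall>e>0. \<exists>U. open U \<and> x \<in> U \<and> (\<forall>x'\<in>U. \<forall>f\<in>F. dist (f x') (f x) < e))"

definition equi_weakly_separated :: "('w::topological_space \<Rightarrow> 'z::metric_space) set \<Rightarrow> bool" where
  "equi_weakly_separated F \<longleftrightarrow>
     (\<forall>e>0. \<exists>V. (\<forall>w. open (V w) \<and> w \<in> V w) \<and>
        (\<forall>p q. \<forall>f\<in>F. (p, q) \<in> V q \<times> V p \<longrightarrow> dist (f p) (f q) < e))"

end

theory Submission
  imports Defs
begin

theorem corollary3p14: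
  fixes F :: "('a::topological_space \<times> 'b::topological_space \<Rightarrow> 'z::metric_space) set"
  assumes "\<forall>x. equicontinuous ((\<lambda>f. \<lambda>y. f (x, y)) ` F)"
    and "\<forall>y. equicontinuous ((\<lambda>f. \<lambda>x. f (x, y)) ` F)"
  shows "equi_weakly_separated F"
  unfolding equi_weakly_separated_def
proof (intro allI impI)
  fix e :: real assume e: "e > 0"
  then have e2: "e/2 > 0" by simp
  have "\<forall>x y. \<exists>U. open U \<and> y \<in> U \<and> (\<forall>y'\<in>U. \<forall>f\<in>F. dist (f (x,y')) (f (x,y)) < e/2)"
  proof (intro allI)
    fix x y
    have "\<forall>t. \<forall>e>0. \<exists>U. open U \<and> t \<in> U \<and> (\<forall>x'\<in>U. \<forall>g\<in>(\<lambda>f. \<lambda>y. f (x, y)) ` F. dist (g x') (g t) < e)"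
      using assms(1) unfolding equicontinuous_def by blast
    then obtain U where "open U \<and> y \<in> U \<and> (\<forall>x'\<in>U. \<forall>g\<in>(\<lambda>f. \<lambda>y. f (x, y)) ` F. dist (g x') (g y) < e/2)"
      using e2 by meson
    then show "\<exists>U. open U \<and> y \<in> U \<and> (\<forall>y'\<in>U. \<forall>f\<in>F. dist (f (x,y')) (f (x,y)) < e/2)" by auto
  qed
  then obtain U where U: "\<And>x y. open (U x y) \<and> y \<in> U x y \<and> (\<forall>y'\<in>U x y. \<forall>f\<in>F. dist (f (x,y')) (f (x,y)) < e/2)"
    by metis
  have "\<forall>x y. \<exists>W. open W \<and> x \<in> W \<and> (\<forall>x'\<in>W. \<forall>f\<in>F. dist (f (x',y)) (f (x,y)) < e/2)"
  proof (intro allI)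
    fix x y
    have "\<forall>t. \<forall>e>0. \<exists>U. open U \<and> t \<in> U \<and> (\<forall>x'\<in>U. \<forall>g\<in>(\<lambda>f. \<lambda>x. f (x, y)) ` F. dist (g x') (g t) < e)"
      using assms(2) unfolding equicontinuous_def by blast
    then obtain W where "open W \<and> x \<in> W \<and> (\<forall>x'\<in>W. \<forall>g\<in>(\<lambda>f. \<lambda>x. f (x, y)) ` F. dist (g x') (g x) < e/2)"
      using e2 by meson
    then show "\<exists>W. open W \<and> x \<in> W \<and> (\<forall>x'\<in>W. \<forall>f\<in>F. dist (f (x',y)) (f (x,y)) < e/2)" by auto
  qed
  then obtain W where W: "\<And>x y. open (W x y) \<and> x \<in> W x y \<and> (\<forall>x'\<in>W x y. \<forall>f\<in>F. dist (f (x',y)) (f (x,y)) < e/2)"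
    by metis
  define V where "V = (\<lambda>w::'a\<times>'b. W (fst w) (snd w) \<times> U (fst w) (snd w))"
  show "\<exists>V. (\<forall>w. open (V w) \<and> w \<in> V w) \<and>
        (\<forall>p q. \<forall>f\<in>F. (p, q) \<in> V q \<times> V p \<longrightarrow> dist (f p) (f q) < e)"
  proof (intro exI conjI allI ballI impI)
    fix w :: "'a\<times>'b"
    show "open (V w)" unfolding V_def using U W by (simp add: open_Times)
    show "w \<in> V w" unfolding V_def using U W by (cases w) auto
  next
    fix p q :: "'a\<times>'b" and f assume f: "f \<in> F" and pq: "(p, q) \<in> V q \<times> V p"
    obtain x1 y1 where p: "p = (x1,y1)" by (cases p)
    obtain x2 y2 where q: "q = (x2,y2)" by (cases q)
    have h1: "x1 \<in> W x2 y2" and h2: "y2 \<in> U x1 y1" using pq p q unfolding V_def by auto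
    have a: "dist (f (x1,y2)) (f (x1,y1)) < e/2" using U h2 f by blast
    have b: "dist (f (x1,y2)) (f (x2,y2)) < e/2" using W h1 f by blast
    have "dist (f (x1,y1)) (f (x2,y2)) \<le> dist (f (x1,y2)) (f (x1,y1)) + dist (f (x1,y2)) (f (x2,y2))"
      by (rule dist_triangle3)
    then show "dist (f p) (f q) < e" using a b p q by simp
  qed
qed

end
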